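(* Let $l\ge1$, $n\ge 1$ and $d\ge n$ be integers and let $\mathcal A=\{a_1<\dots<a_l\}$ be a totally ordered alphabet. Then every word over $\mathcal A$ of length at least $$256\, l\,(nd)^{2\log_2(nd)+10}d^2$$ either contains a subword of the form $u^d$ for some nonempty word $u$, or is $n$-divisible.
   Context: Words are finite sequences of letters; a subword means a contiguous factor. Two words $u,v$ are called comparable if neither is a prefix of the other. For comparable $u,v$ write $u\succ v$ if at the first position where they differ the letter of $u$ is larger. A word $W$ is $n$-divisible if it contains a subword $u_1u_2\cdots u_n$ with nonempty $u_i$ and $u_1\succ u_2\succ\dots\succ u_n$. *)

theory Defs
  imports Complex_Main "HOL-Library.Sublist"
begin

definition comparable :: "'a list \<Rightarrow> 'a list \<Rightarrow> bool" where
  "comparable u v \<longleftrightarrow> \<not> prefix u v \<and> \<not> prefix v u"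

definition word_gt :: "'a::linorder list \<Rightarrow> 'a list \<Rightarrow> bool" where
  "word_gt u v \<longleftrightarrow> comparable u v \<and>
     (\<exists>p a b s t. u = p @ a # s \<and> v = p @ b # t \<and> b < a)"

definition n_divisible :: "nat \<Rightarrow> 'a::linorder list \<Rightarrow> bool" where
  "n_divisible n W \<longleftrightarrow> (\<exists>us. length us = n \<and> (\<forall>u\<in>set us. u \<noteq> []) \<and>
     (\<forall>i. Suc i < n \<longrightarrow> word_gt (us ! i) (us ! Suc i)) \<and> sublist (concat us) W)"

end

theory Submission
  imports Defs "HOL-Library.List_Lexorder"
begin


lemma word_gtI:
  assumes "u = p @ a # s" "v = p @ b # t" "b < a"
  shows "word_gt u v"
proof -
  have "\<not> prefix u v"
  proof
    assume "prefix u v"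
    then obtain z where "v = u @ z" by (auto simp: prefix_def)
    with assms show False by auto
  qed
  moreover have "\<not> prefix v u"
  proof
    assume "prefix v u"
    then obtain z where "u = v @ z" by (auto simp: prefix_def)
    with assms show False by auto
  qed
  ultimately show ?thesis using assms unfolding word_gt_def comparable_def by blast
qed

lemma word_gt_prefix:
  assumes "word_gt u v" "prefix u u'" "prefix v v'"
  shows "word_gt u' v'"
proof -
  obtain p a b s t where h: "u = p @ a # s" "v = p @ b # t" "b < a"
    using assms(1) unfolding word_gt_def by blast
  obtain x where x: "u' = u @ x" using assms(2) by (auto simp: prefix_def)
  obtain y where y: "v' = v @ y" using assms(3) by (auto simp: prefix_def)
  show ?thesis using h x y by (intro word_gtI[of _ p a "s@x" _ b "t@y"]) auto
qed

lemma less_same_length_word_gt: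
  fixes u v :: "'a::linorder list"
  assumes "length u = length v" "v < u"
  shows "word_gt u v"
proof -
  have "(v, u) \<in> lexord {(x, y). x < y}" using assms(2) by (simp add: list_less_def)
  then obtain a w where "(u = v @ a # w) \<or> (\<exists>p b a s t. b < a \<and> v = p @ b # s \<and> u = p @ a # t)"
    unfolding lexord_def by blast
  then show ?thesis
  proof
    assume "u = v @ a # w" with assms(1) show ?thesis by simp
  next
    assume "\<exists>p b a s t. b < a \<and> v = p @ b # s \<and> u = p @ a # t"
    then show ?thesis using word_gtI by blast
  qed
qed

definition win :: "'a list \<Rightarrow> nat \<Rightarrow> nat \<Rightarrow> 'a list" where
  "win W i k = take k (drop i W)"

lemma chain_div_aux:
  fixes W :: "'a::linorder list"
  assumes "successively (\<lambda>a b. a + G \<le> b \<and> win W b G < win W a G) ps" "ps \<noteq> []"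
    "last ps + G \<le> length W" "G \<ge> 1"
  shows "\<exists>us. length us = length ps \<and> (\<forall>u\<in>set us. u \<noteq> []) \<and> successively word_gt us
     \<and> concat us = take (last ps + G - hd ps) (drop (hd ps) W) \<and> prefix (win W (hd ps) G) (hd us)
     \<and> hd ps \<le> last ps"
  using assms
proof (induction ps rule: induct_list012)
  case 1 then show ?case by simp
next
  case (2 p)
  show ?case
    by (rule exI[of _ "[win W p G]"]) (use 2 in \<open>auto simp: win_def\<close>)
next
  case (3 p q rest)
  have s: "p + G \<le> q" "win W q G < win W p G" "successively (\<lambda>a b. a + G \<le> b \<and> win W b G < win W a G) (q # rest)"
    using 3(3) by auto
  obtain us where us: "length us = length (q # rest)" "\<forall>u\<in>set us. u \<noteq> []" "successively word_gt us"
    "concat us = take (last (q#rest) + G - q) (drop q W)" "prefix (win W q G) (hd us)" "q \<le> last (q # rest)"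
    using 3(2)[OF s(3)] 3(5,6) by auto
  have lw: "last (p # q # rest) = last (q # rest)" by simp
  have lenq: "q \<le> length W" using us(6) 3(5) by simp
  define u0 where "u0 = take (q - p) (drop p W)"
  have u0ne: "u0 \<noteq> []" using s(1) lenq 3(6) by (simp add: u0_def)
  have pre0: "prefix (win W p G) u0"
  proof -
    have "take (q-p) (drop p W) = take (G + (q-p-G)) (drop p W)" using s(1) by simp
    also have "\<dots> = take G (drop p W) @ take (q-p-G) (drop G (drop p W))" by (rule take_add)
    finally show ?thesis unfolding u0_def win_def prefix_def by blast
  qed
  have lenw: "length (win W p G) = length (win W q G)" using s(1) lenq 3(6) lw 3(5) us(6)
    by (simp add: win_def)
  have gt: "word_gt (win W p G) (win W q G)" using less_same_length_word_gt[OF lenw s(2)] .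
  have gt2: "word_gt u0 (hd us)" using word_gt_prefix[OF gt pre0 us(5)] .
  have usne: "us \<noteq> []" using us(1) by auto
  have cc: "u0 @ concat us = take (last (q#rest) + G - p) (drop p W)"
  proof -
    have "last (q#rest) + G - p = (q - p) + (last (q#rest) + G - q)" using s(1) us(6) by simp
    then show ?thesis unfolding u0_def us(4) using take_add[of "q-p" "last (q#rest) + G - q" "drop p W"]
      using s(1) by (simp add: add.commute)
  qed
  show ?case
    apply (rule exI[of _ "u0 # us"])
    using us u0ne pre0 gt2 usne cc s(1) by (auto simp: successively_Cons)
qed



lemma successively_nth:
  "successively P xs \<Longrightarrow> Suc i < length xs \<Longrightarrow> P (xs!i) (xs!Suc i)"
proof (induction xs arbitrary: i rule: induct_list012)
  case (3 x y zs)
  then show ?case by (cases i) auto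
qed auto

lemma chain_ndiv:
  fixes W :: "'a::linorder list"
  assumes "successively (\<lambda>a b. a + G \<le> b \<and> win W b G < win W a G) ps" "length ps = n" "n \<ge> 1"
    "last ps + G \<le> length W" "G \<ge> 1"
  shows "n_divisible n W"
proof -
  have "ps \<noteq> []" using assms(2,3) by auto
  from chain_div_aux[OF assms(1) this assms(4,5)]
  obtain us where us: "length us = n" "\<forall>u\<in>set us. u \<noteq> []" "successively word_gt us"
     "concat us = take (last ps + G - hd ps) (drop (hd ps) W)" using assms(2) by auto
  have "sublist (concat us) W" unfolding us(4)
    by (meson sublist_drop sublist_order.order.trans sublist_take)
  then show ?thesis unfolding n_divisible_def using us successively_nth[OF us(3)] by auto
qed

lemma power_from_eq:
  assumes "0 < p" "i + p \<le> length W" "(d-1)*p \<le> G" "win W i G = win W (i+p) G"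
  shows "\<exists>u. u \<noteq> [] \<and> sublist (concat (replicate d u)) W"
proof -
  define X where "X = drop i W"
  define u where "u = take p X"
  have eq: "take G X = take G (drop p X)" using assms(4) unfolding win_def X_def
    by (simp add: add.commute)
  have claim: "k \<le> d \<longrightarrow> take (k*p) X = concat (replicate k u)" for k
  proof (induction k)
    case 0 then show ?case by simp
  next
    case (Suc k)
    show ?case
    proof
      assume k: "Suc k \<le> d"
      have kp: "k*p \<le> G" using k assms(3)
        by (metis Suc_le_mono le_diff_conv2 mult_le_mono1 order_trans plus_1_eq_Suc add.commute Suc_le_D diff_Suc_1 nat_le_linear)
      have "take (Suc k * p) X = take (p + k*p) X" by (simp add: add.commute)
      also have "\<dots> = take p X @ take (k*p) (drop p X)" by (rule take_add)
      also have "take (k*p) (drop p X) = take (k*p) (take G (drop p X))" using kp by (simp add: min_def)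
      also have "\<dots> = take (k*p) (take G X)" using eq by simp
      also have "\<dots> = take (k*p) X" using kp by (simp add: min_def)
      also have "\<dots> = concat (replicate k u)" using Suc k by simp
      finally show "take (Suc k * p) X = concat (replicate (Suc k) u)" unfolding u_def by simp
    qed
  qed
  have "u \<noteq> []" unfolding u_def X_def using assms(1,2) by simp
  moreover have "sublist (concat (replicate d u)) W" using claim[of d] unfolding X_def
    by (metis order_refl sublist_drop sublist_order.order.trans sublist_take)
  ultimately show ?thesis by blast
qed

lemma heights:
  fixes Q :: "nat \<Rightarrow> nat \<Rightarrow> bool"
  assumes nochain: "\<And>ps. successively Q ps \<Longrightarrow> length ps < n" and n2: "n \<ge> 2"
  shows "\<exists>h. (\<forall>i. 1 \<le> h i \<and> h i < n) \<and> (\<forall>i j. Q i j \<longrightarrow> h i < h j)"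
proof -
  define S where "S i = {k. \<exists>ps. successively Q ps \<and> ps \<noteq> [] \<and> last ps = i \<and> length ps = k}" for i
  define h where "h i = Max (S i)" for i
  have fin: "finite (S i)" for i
    by (rule finite_subset[of _ "{..<n}"]) (auto simp: S_def dest: nochain)
  have one: "1 \<in> S i" for i unfolding S_def by (rule CollectI, rule exI[of _ "[i]"]) simp
  have hin: "h i \<in> S i" for i unfolding h_def using fin one by (intro Max_in) auto
  have "1 \<le> h i" for i unfolding h_def using fin one by (intro Max_ge) auto
  moreover have "h i < n" for i using hin[of i] unfolding S_def by (auto dest: nochain)
  moreover have "h i < h j" if "Q i j" for i j
  proof -
    obtain ps where ps: "successively Q ps" "ps \<noteq> []" "last ps = i" "length ps = h i"
      using hin[of i] unfolding S_def by auto
    have "successively Q (ps @ [j])" using ps that by (auto simp: successively_append_iff)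
    then have "h i + 1 \<in> S j" unfolding S_def using ps by (intro CollectI exI[of _ "ps @ [j]"]) auto
    then have "h i + 1 \<le> h j" unfolding h_def using fin by (intro Max_ge) auto
    then show ?thesis by simp
  qed
  ultimately show ?thesis by blast
qed

lemma card_image_factor:
  assumes "finite I" "\<And>i i'. i \<in> I \<Longrightarrow> i' \<in> I \<Longrightarrow> \<phi> i = \<phi> i' \<Longrightarrow> g i = g i'"
  shows "card (g ` I) \<le> card (\<phi> ` I)"
proof -
  define \<psi> where "\<psi> y = g (SOME i. i \<in> I \<and> \<phi> i = y)" for y
  have eqs: "\<psi> (\<phi> i) = g i" if i: "i \<in> I" for i
  proof -
    have ex: "\<exists>i'. i' \<in> I \<and> \<phi> i' = \<phi> i" using i by blast
    show ?thesis unfolding \<psi>_def using someI_ex[OF ex] assms(2) i by blast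
  qed
  have "g ` I = (\<lambda>i. \<psi> (\<phi> i)) ` I" using eqs by (auto simp: image_def)
  also have "\<dots> = \<psi> ` (\<phi> ` I)" by (simp add: image_image)
  finally have "g ` I = \<psi> ` (\<phi> ` I)" .
  then show ?thesis using assms(1) by (simp add: card_image_le)
qed



definition Fac :: "'a list \<Rightarrow> nat \<Rightarrow> 'a list set" where
  "Fac W k = (\<lambda>i. win W i k) ` {i. i + k \<le> length W}"

lemma finite_Fac: "finite (Fac W k)"
  unfolding Fac_def by (rule finite_imageI, rule finite_subset[of _ "{..length W}"]) auto

lemma in_Fac: "i + k \<le> length W \<Longrightarrow> win W i k \<in> Fac W k"
  unfolding Fac_def by auto

definition rk :: "'a::linorder list \<Rightarrow> nat \<Rightarrow> 'a list \<Rightarrow> nat" where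
  "rk W G w = card {z \<in> Fac W G. z < w}"

lemma rk_mono: "w \<le> w' \<Longrightarrow> rk W G w \<le> rk W G w'"
  unfolding rk_def by (rule card_mono) (auto intro: finite_subset[OF _ finite_Fac])

lemma rk_strict: "w \<in> Fac W G \<Longrightarrow> w < w' \<Longrightarrow> rk W G w < rk W G w'"
  unfolding rk_def by (rule psubset_card_mono) (auto intro: finite_subset[OF _ finite_Fac])

lemma rk_bound: "w \<in> Fac W G \<Longrightarrow> rk W G w < card (Fac W G)"
  unfolding rk_def by (rule psubset_card_mono) (auto intro: finite_Fac)

lemma successively_last:
  assumes "successively P xs" "length xs \<ge> 2"
  shows "\<exists>a. P a (last xs)"
proof -
  have "Suc (length xs - 2) < length xs" using assms(2) by simp
  from successively_nth[OF assms(1) this] have "P (xs ! (length xs - 2)) (xs ! Suc (length xs - 2))" .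
  moreover have "Suc (length xs - 2) = length xs - 1" using assms(2) by simp
  moreover have "xs ! (length xs - 1) = last xs" using assms(2) by (cases xs) (auto simp: last_conv_nth)
  ultimately show ?thesis by metis
qed

lemma nochain_gen:
  fixes W :: "'a::linorder list"
  assumes nd: "\<not> n_divisible n W" and n2: "n \<ge> 2" and G: "G \<ge> 1"
   and R: "\<And>i j. R i j \<Longrightarrow> i + G \<le> j \<and> j + G \<le> length W"
   and ps: "successively (\<lambda>i j. R i j \<and> win W j G < win W i G) ps"
  shows "length ps < n"
proof (rule ccontr)
  assume "\<not> length ps < n"
  define qs where "qs = take n ps"
  have lq: "length qs = n" using \<open>\<not> length ps < n\<close> unfolding qs_def by simp
  have sq: "successively (\<lambda>i j. R i j \<and> win W j G < win W i G) qs"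
    using ps unfolding qs_def
    by (metis append_take_drop_id successively_append_iff)
  obtain a where "R a (last qs) \<and> win W (last qs) G < win W a G"
    using successively_last[OF sq] lq n2 by auto
  then have last: "last qs + G \<le> length W" using R by blast
  have "successively (\<lambda>a b. a + G \<le> b \<and> win W b G < win W a G) qs"
    using sq by (rule successively_mono) (use R in blast)
  from chain_ndiv[OF this lq _ last G] n2 nd show False by simp
qed

lemma doubling:
  fixes W :: "'a::linorder list"
  assumes nd: "\<not> n_divisible n W" and n2: "n \<ge> 2" and G: "G \<ge> 1"
  shows "card (Fac W (2*G)) \<le> G * (n-1) * (n-1) * (2 * card (Fac W G))"
proof -
  define N where "N = length W"
  define U where "U = card (Fac W G)"
  define R where "R i j \<longleftrightarrow> i mod G = j mod G \<and> i < j \<and> j + G \<le> N" for i j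
  have Rp: "i + G \<le> j \<and> j + G \<le> length W" if "R i j" for i j
  proof -
    have "G dvd (j - i)" using that unfolding R_def by (metis less_or_eq_imp_le mod_eq_dvd_iff_nat)
    moreover have "j - i > 0" using that unfolding R_def by simp
    ultimately have "G \<le> j - i" by (simp add: dvd_imp_le)
    then show ?thesis using that unfolding R_def N_def by auto
  qed
  define Q where "Q i j \<longleftrightarrow> R i j \<and> win W j G < win W i G" for i j
  have "\<And>ps. successively Q ps \<Longrightarrow> length ps < n"
    unfolding Q_def by (rule nochain_gen[OF nd n2 G Rp]) auto
  from heights[OF this n2] obtain h where h: "\<forall>i. 1 \<le> h i \<and> h i < n" "\<forall>i j. Q i j \<longrightarrow> h i < h j"
    by blast
  have hmono: "win W i G \<le> win W j G" if "R i j" "h i = h j" for i j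
    using h(2) that unfolding Q_def by (metis less_irrefl not_less)
  define I where "I = {i. i + 2*G \<le> N}"
  define \<phi> where "\<phi> i = (i mod G, h i, h (i+G), rk W G (win W i G) + rk W G (win W (i+G) G))" for i
  have split: "win W i (2*G) = win W i G @ win W (i+G) G" for i
    unfolding win_def using take_add[of G G "drop i W"] by (simp add: mult_2 add.commute)
  have key: "win W i (2*G) = win W i' (2*G)" if "i \<in> I" "i' \<in> I" "\<phi> i = \<phi> i'" "i < i'" for i i'
  proof -
    have m: "i mod G = i' mod G" "h i = h i'" "h (i+G) = h (i'+G)"
      "rk W G (win W i G) + rk W G (win W (i+G) G) = rk W G (win W i' G) + rk W G (win W (i'+G) G)"
      using that(3) unfolding \<phi>_def by auto
    have R1: "R i i'" unfolding R_def using m(1) that(2,4) by (auto simp: I_def)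
    have R2: "R (i+G) (i'+G)" unfolding R_def using m(1) that(2,4) by (auto simp: I_def mod_add_right_eq)
    have a: "win W i G \<le> win W i' G" using hmono[OF R1 m(2)] .
    have b: "win W (i+G) G \<le> win W (i'+G) G" using hmono[OF R2 m(3)] .
    have ia: "win W i G \<in> Fac W G" "win W (i+G) G \<in> Fac W G"
      using that(1) by (auto simp: I_def N_def intro!: in_Fac)
    have ra: "rk W G (win W i G) \<le> rk W G (win W i' G)" using rk_mono[OF a] .
    have rb: "rk W G (win W (i+G) G) \<le> rk W G (win W (i'+G) G)" using rk_mono[OF b] .
    have e1: "win W i G = win W i' G"
    proof (rule ccontr)
      assume "win W i G \<noteq> win W i' G"
      then have "win W i G < win W i' G" using a by simp
      from rk_strict[OF ia(1) this] ra rb m(4) show False by linarith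
    qed
    have e2: "win W (i+G) G = win W (i'+G) G"
    proof (rule ccontr)
      assume "win W (i+G) G \<noteq> win W (i'+G) G"
      then have "win W (i+G) G < win W (i'+G) G" using b by simp
      from rk_strict[OF ia(2) this] ra rb m(4) show False by linarith
    qed
    show ?thesis using split e1 e2 by metis
  qed
  have fin: "finite I" unfolding I_def by (rule finite_subset[of _ "{..N}"]) auto
  have "Fac W (2*G) = (\<lambda>i. win W i (2*G)) ` I" unfolding Fac_def I_def N_def by simp
  also have "card \<dots> \<le> card (\<phi> ` I)"
  proof (rule card_image_factor[OF fin])
    fix i i' assume "i \<in> I" "i' \<in> I" "\<phi> i = \<phi> i'"
    then show "win W i (2*G) = win W i' (2*G)" using key
      by (metis linorder_neqE_nat)
  qed
  also have "\<dots> \<le> card ({..<G} \<times> {1..<n} \<times> {1..<n} \<times> {..<2*U})"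
  proof (rule card_mono)
    show "finite ({..<G} \<times> {1..<n} \<times> {1..<n} \<times> {..<2*U})" by simp
    show "\<phi> ` I \<subseteq> {..<G} \<times> {1..<n} \<times> {1..<n} \<times> {..<2*U}"
    proof
      fix y assume "y \<in> \<phi> ` I"
      then obtain i where i: "i \<in> I" "y = \<phi> i" by auto
      have ia: "win W i G \<in> Fac W G" "win W (i+G) G \<in> Fac W G"
        using i(1) by (auto simp: I_def N_def intro!: in_Fac)
      have "rk W G (win W i G) < U" "rk W G (win W (i+G) G) < U"
        using rk_bound[OF ia(1)] rk_bound[OF ia(2)] unfolding U_def by auto
      then show "y \<in> {..<G} \<times> {1..<n} \<times> {1..<n} \<times> {..<2*U}"
        using i(2) h(1) G unfolding \<phi>_def by auto
    qed
  qed
  also have "\<dots> = G * (n-1) * (n-1) * (2 * U)" by (simp add: card_cartesian_product)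
  finally show ?thesis unfolding U_def .
qed



lemma groups:
  fixes W :: "'a::linorder list"
  assumes nd: "\<not> n_divisible n W" and np: "\<not> (\<exists>u. u \<noteq> [] \<and> sublist (concat (replicate d u)) W)"
    and n2: "n \<ge> 2" and G: "G \<ge> 1" and Gd: "(d-1)*(n-1) \<le> G"
  shows "length W < ((n-1) * card (Fac W G) + 1) * (G + n) + G"
proof (rule ccontr)
  define N where "N = length W"
  define U where "U = card (Fac W G)"
  define M where "M = (n-1) * U + 1"
  define T where "T = G + n"
  assume "\<not> length W < ((n-1) * card (Fac W G) + 1) * (G + n) + G"
  then have big: "M * T + G \<le> N" unfolding M_def T_def U_def N_def by simp
  define R where "R i j \<longleftrightarrow> i div T < j div T \<and> i mod T < n \<and> j mod T < n \<and> j div T < M" for i j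
  have Rp: "i + G \<le> j \<and> j + G \<le> length W" if "R i j" for i j
  proof -
    have r: "i div T < j div T" "i mod T < n" "j div T < M" using that unfolding R_def by auto
    have "i = i div T * T + i mod T" by simp
    moreover have "Suc (i div T) * T \<le> j div T * T" using r(1) by (intro mult_le_mono1) simp
    moreover have "j div T * T \<le> j" by (metis div_mult_mod_eq le_add1)
    moreover have "Suc (i div T) * T = T + i div T * T" by simp
    ultimately have 1: "i + G \<le> j" using r(2) T_def by linarith
    have Tp: "0 < T" unfolding T_def using n2 by simp
    have "j = j div T * T + j mod T" by simp
    moreover have "j mod T < T" using Tp by simp
    moreover have "Suc (j div T) * T = T + j div T * T" by simp
    ultimately have "j < Suc (j div T) * T" by linarith
    moreover have "Suc (j div T) * T \<le> M * T" using r(3) by (intro mult_le_mono1) simp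
    ultimately have "j + G \<le> N" using big by simp
    with 1 show ?thesis unfolding N_def by simp
  qed
  define Q where "Q i j \<longleftrightarrow> R i j \<and> win W j G < win W i G" for i j
  have "\<And>ps. successively Q ps \<Longrightarrow> length ps < n"
    unfolding Q_def by (rule nochain_gen[OF nd n2 G Rp]) auto
  from heights[OF this n2] obtain h where h: "\<forall>i. 1 \<le> h i \<and> h i < n" "\<forall>i j. Q i j \<longrightarrow> h i < h j"
    by blast
  have hmono: "win W i G \<le> win W j G" if "R i j" "h i = h j" for i j
    using h(2) that unfolding Q_def by (metis less_irrefl not_less)
  define pos where "pos s r = s * T + r" for s r
  define D where "D = {..<M} \<times> {..<n}"
  define \<phi> where "\<phi> x = (h (pos (fst x) (snd x)), rk W G (win W (pos (fst x) (snd x)) G) + fst x)" for x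
  have posdiv: "pos s r div T = s" "pos s r mod T = r" if "r < n" for s r
    using that unfolding pos_def T_def by auto
  have posrange: "pos s r + G \<le> N" if "s < M" "r < n" for s r
  proof -
    have "pos s r < Suc s * T" unfolding pos_def T_def using that by simp
    also have "Suc s * T \<le> M * T" using that by (intro mult_le_mono1) simp
    finally show ?thesis using big by simp
  qed
  have inF: "win W (pos s r) G \<in> Fac W G" if "s < M" "r < n" for s r
    using posrange[OF that] by (intro in_Fac) (simp add: N_def)
  have diff_s: False if "x \<in> D" "y \<in> D" "\<phi> x = \<phi> y" "fst x < fst y" for x y
  proof -
    obtain s r s' r' where xy: "x = (s, r)" "y = (s', r')" by (cases x, cases y) auto
    have b: "s < M" "r < n" "s' < M" "r' < n" using that(1,2) xy unfolding D_def by auto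
    have "R (pos s r) (pos s' r')" unfolding R_def using posdiv b that(4) xy by auto
    moreover have "h (pos s r) = h (pos s' r')" using that(3) xy unfolding \<phi>_def by simp
    ultimately have "win W (pos s r) G \<le> win W (pos s' r') G" by (rule hmono)
    then have "rk W G (win W (pos s r) G) \<le> rk W G (win W (pos s' r') G)" by (rule rk_mono)
    moreover have "rk W G (win W (pos s r) G) + s = rk W G (win W (pos s' r') G) + s'"
      using that(3) xy unfolding \<phi>_def by simp
    ultimately show False using that(4) xy by simp
  qed
  have same_s: False if "x \<in> D" "y \<in> D" "\<phi> x = \<phi> y" "fst x = fst y" "snd x < snd y" for x y
  proof -
    obtain s r s' r' where xy: "x = (s, r)" "y = (s', r')" by (cases x, cases y) auto
    have b: "s < M" "r < n" "s' < M" "r' < n" using that(1,2) xy unfolding D_def by auto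
    have ss: "s' = s" "r < r'" using that(4,5) xy by auto
    have rkeq: "rk W G (win W (pos s r) G) = rk W G (win W (pos s r') G)"
      using that(3) xy ss unfolding \<phi>_def by simp
    have neq: "win W (pos s r) G \<noteq> win W (pos s r + (r' - r)) G"
    proof
      assume eq: "win W (pos s r) G = win W (pos s r + (r' - r)) G"
      have "(d-1)*(r'-r) \<le> (d-1)*(n-1)" using ss b by (intro mult_le_mono2) simp
      also have "\<dots> \<le> G" using Gd .
      finally have dd: "(d-1)*(r'-r) \<le> G" .
      have "pos s r + (r' - r) \<le> length W" using posrange[OF b(1) b(4)] ss unfolding pos_def N_def by simp
      from power_from_eq[OF _ this dd eq] ss np show False by simp
    qed
    have pp: "pos s r + (r' - r) = pos s r'" using ss unfolding pos_def by simp
    show False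
    proof (cases "win W (pos s r) G < win W (pos s r') G")
      case True
      from rk_strict[OF inF[OF b(1,2)] True] rkeq show False by simp
    next
      case False
      then have "win W (pos s r') G < win W (pos s r) G" using neq pp by (metis neqE)
      from rk_strict[OF inF[OF b(1) b(4)] this] rkeq show False by simp
    qed
  qed
  have inj: "inj_on \<phi> D"
  proof (rule inj_onI)
    fix x y assume xy: "x \<in> D" "y \<in> D" "\<phi> x = \<phi> y"
    show "x = y"
    proof (cases "fst x = fst y")
      case True
      show ?thesis
      proof (rule ccontr)
        assume "x \<noteq> y"
        then have "snd x \<noteq> snd y" using True by (simp add: prod_eq_iff)
        then show False using same_s[OF xy True] same_s[OF xy(2,1) xy(3)[symmetric] True[symmetric]]
          by (metis neqE)
      qed
    next
      case False
      then show ?thesis using diff_s[OF xy] diff_s[OF xy(2,1) xy(3)[symmetric]] by (metis neqE)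
    qed
  qed
  have sub: "\<phi> ` D \<subseteq> {1..<n} \<times> {..<U + M}"
  proof
    fix z assume "z \<in> \<phi> ` D"
    then obtain s r where sr: "s < M" "r < n" "z = \<phi> (s, r)" unfolding D_def by auto
    have "rk W G (win W (pos s r) G) < U" using rk_bound[OF inF[OF sr(1,2)]] unfolding U_def .
    then show "z \<in> {1..<n} \<times> {..<U + M}" using sr h(1) unfolding \<phi>_def by auto
  qed
  have "M * n = card D" unfolding D_def by (simp add: card_cartesian_product)
  also have "\<dots> = card (\<phi> ` D)" using inj by (simp add: card_image)
  also have "\<dots> \<le> card ({1..<n} \<times> {..<U + M})" using sub by (intro card_mono) auto
  also have "\<dots> = (n-1) * (U + M)" by (simp add: card_cartesian_product)
  finally have ineq: "M * n \<le> (n-1) * (U + M)" .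
  have "M * n = M * (n-1) + M" using n2 by (cases n) auto
  then have "M \<le> (n-1) * U" using ineq by (simp add: algebra_simps)
  then show False unfolding M_def by simp
qed



lemma Fac1:
  assumes "set W \<subseteq> A" "finite A"
  shows "card (Fac W 1) \<le> card A"
proof -
  have "Fac W 1 \<subseteq> (\<lambda>a. [a]) ` A"
  proof
    fix v assume "v \<in> Fac W 1"
    then obtain i where i: "i + 1 \<le> length W" "v = win W i 1" unfolding Fac_def by auto
    then have "v = [W ! i]" unfolding win_def by (simp add: Cons_nth_drop_Suc[symmetric])
    moreover have "W ! i \<in> A" using i(1) assms(1) nth_mem[of i W] by auto
    ultimately show "v \<in> (\<lambda>a. [a]) ` A" by blast
  qed
  then have "card (Fac W 1) \<le> card ((\<lambda>a. [a]) ` A)" using assms(2) by (intro card_mono) auto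
  also have "\<dots> \<le> card A" using assms(2) by (rule card_image_le)
  finally show ?thesis .
qed

lemma iterate:
  fixes W :: "'a::linorder list"
  assumes nd: "\<not> n_divisible n W" and n2: "n \<ge> 2" and nn: "(n-1)*(n-1) \<le> 2^j"
    and F1: "card (Fac W 1) \<le> l"
  shows "k \<le> j \<Longrightarrow> card (Fac W (2^k)) \<le> l * (2^j*2^j)^k"
proof (induction k)
  case 0 then show ?case using F1 by simp
next
  case (Suc k)
  have IH: "card (Fac W (2^k)) \<le> l * (2^j*2^j)^k" using Suc by simp
  have "card (Fac W (2^Suc k)) = card (Fac W (2 * 2^k))" by simp
  also have "\<dots> \<le> 2^k * (n-1) * (n-1) * (2 * card (Fac W (2^k)))"
    by (rule doubling[OF nd n2]) simp
  also have "\<dots> = (2^Suc k) * ((n-1) * (n-1)) * card (Fac W (2^k))" by simp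
  also have "\<dots> \<le> 2^j * 2^j * card (Fac W (2^k))"
  proof -
    have "(2::nat)^Suc k \<le> 2^j" using Suc.prems by (intro power_increasing) auto
    then show ?thesis using nn by (intro mult_le_mono1 mult_le_mono) auto
  qed
  also have "\<dots> \<le> 2^j * 2^j * (l * (2^j*2^j)^k)" using IH by (intro mult_le_mono2)
  also have "\<dots> = l * (2^j*2^j)^Suc k" by (simp add: algebra_simps)
  finally show ?case .
qed

lemma powr_log_expand:
  assumes "0 < y" shows "y powr (2*log 2 y + 10) = 2 powr (log 2 y * (2*log 2 y+10))"
proof -
  have "y powr (2*log 2 y + 10) = (2 powr log 2 y) powr (2*log 2 y+10)" using assms by simp
  also have "\<dots> = 2 powr (log 2 y * (2*log 2 y+10))" by (simp add: powr_powr)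
  finally show ?thesis .
qed

lemma powr_nat_eq: "(2::real) powr (real m * (2 * real m + 10)) = 2 ^ (m * (2*m+10))"
proof -
  have "real m * (2 * real m + 10) = real (m * (2*m+10))" by simp
  then show ?thesis by (simp only:) (rule powr_realpow, simp)
qed

theorem theoremt2:
  fixes A :: "'a::linorder set" and l n d :: nat and W :: "'a list"
  assumes "l \<ge> 1" and "n \<ge> 1" and "d \<ge> n"
    and "finite A" and "card A = l"
    and "set W \<subseteq> A"
    and "real (length W) \<ge> 256 * real l * (real (n * d)) powr (2 * log 2 (real (n * d)) + 10) * (real d)^2"
  shows "(\<exists>u. u \<noteq> [] \<and> sublist (concat (replicate d u)) W) \<or> n_divisible n W"
proof (rule ccontr)
  assume contra: "\<not> ?thesis"
  then have nd: "\<not> n_divisible n W" and np: "\<not> (\<exists>u. u \<noteq> [] \<and> sublist (concat (replicate d u)) W)"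
    by auto
  define B where "B = 256 * real l * (real (n * d)) powr (2 * log 2 (real (n * d)) + 10) * (real d)^2"
  have d1: "d \<ge> 1" using assms(2,3) by simp
  have ndpos: "real (n*d) > 0" using assms(2) d1 by simp
  have pp: "(real (n * d)) powr (2 * log 2 (real (n * d)) + 10) > 0" using ndpos by (metis powr_gt_zero less_irrefl)
  have Bpos: "B > 0" unfolding B_def using assms(1) d1 pp by (intro mult_pos_pos) auto
  have NB: "real (length W) \<ge> B" using assms(7) unfolding B_def .
  show False
  proof (cases "n = 1")
    case True
    have "W \<noteq> []" using NB Bpos by auto
    then have "n_divisible n W" unfolding n_divisible_def using True
      by (intro exI[of _ "[W]"]) auto
    with nd show False by simp
  next
    case False
    then have n2: "n \<ge> 2" using assms(2) by simp
    have d2: "d \<ge> 2" using n2 assms(3) by simp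
    have nd4: "n * d \<ge> 4" using n2 d2 mult_le_mono[OF n2 d2] by simp
    define j where "j = (LEAST j. n * d \<le> (2::nat)^j)"
    have ex: "\<exists>j. n * d \<le> (2::nat)^j" using less_exp[of "n*d"] by (meson less_imp_le)
    have j1: "n * d \<le> 2^j" unfolding j_def using LeastI_ex[OF ex] .
    have jpos: "j \<ge> 1"
    proof (rule ccontr)
      assume "\<not> j \<ge> 1" then have "j = 0" by simp
      with j1 nd4 show False by simp
    qed
    obtain m where m: "j = Suc m" using jpos by (cases j) auto
    have j2: "\<not> n * d \<le> 2^m" unfolding j_def
      using not_less_Least[of m "\<lambda>j. n * d \<le> (2::nat)^j"] m j_def by simp
    define G where "G = (2::nat)^j"
    have G1: "G \<ge> 1" unfolding G_def by simp
    have nn: "(n-1)*(n-1) \<le> 2^j"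
    proof -
      have "(n-1)*(n-1) \<le> n*d" using assms(3) by (intro mult_le_mono) auto
      then show ?thesis using j1 by simp
    qed
    have Gd: "(d-1)*(n-1) \<le> G"
    proof -
      have "(d-1)*(n-1) \<le> n*d" by (simp add: mult.commute mult_le_mono)
      then show ?thesis using j1 unfolding G_def by simp
    qed
    have F1: "card (Fac W 1) \<le> l" using Fac1[OF assms(6,4)] assms(5) by simp
    have U: "card (Fac W G) \<le> l * (2^j*2^j)^j"
      unfolding G_def by (rule iterate[OF nd n2 nn F1]) simp
    have grp: "length W < ((n-1) * card (Fac W G) + 1) * (G + n) + G"
      by (rule groups[OF nd np n2 G1 Gd])
    define X where "X = l * (2^j*2^j)^j"
    have X1: "X \<ge> 1" unfolding X_def using assms(1) by simp
    have nG: "n \<le> G" using j1 d1 unfolding G_def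
      by (metis le_trans mult_le_mono2 mult.right_neutral)
    have "(n-1) * card (Fac W G) + 1 \<le> G * X + X"
      using U nG X1 assms(1) unfolding X_def by (intro add_mono mult_le_mono) auto
    also have "\<dots> \<le> 2 * G * X" using G1 by (simp add: algebra_simps)
    finally have a1: "(n-1) * card (Fac W G) + 1 \<le> 2 * G * X" .
    have a2: "G + n \<le> 2 * G" using nG by simp
    have "((n-1) * card (Fac W G) + 1) * (G + n) + G \<le> (2*G*X) * (2*G) + G"
      using a1 a2 by (intro add_mono mult_le_mono) auto
    also have "\<dots> \<le> (2*G*X) * (2*G) + (2*G*X) * (2*G)"
    proof -
      have "0 < 2*G*X*2" using X1 G1 by simp
      then have "G * 1 \<le> G * (2*G*X*2)" by (intro mult_le_mono2) simp
      then show ?thesis by (simp add: algebra_simps)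
    qed
    also have "\<dots> = 8 * (G * G) * X" by algebra
    also have "\<dots> \<le> 2^(6*j) * X"
    proof -
      have "2*j+3 = j+j+3" by simp
      then have "(2::nat)^(2*j + 3) = 2^(j+j+3)" by (simp only:)
      also have "\<dots> = 2^j*2^j*2^3" by (simp only: power_add)
      also have "\<dots> = 8 * (G * G)" unfolding G_def by simp
      finally have "8 * (G * G) = (2::nat)^(2*j + 3)" by simp
      also have "\<dots> \<le> 2^(6*j)" using jpos by (intro power_increasing) auto
      finally show ?thesis by (intro mult_le_mono1)
    qed
    finally have Nnat: "length W < 2^(6*j) * X" using grp by linarith
    have e1: "(2^j*2^j)^j = (2::nat)^((j+j)*j)" by (metis power_add power_mult)
    have e2: "6*j + (j+j)*j = m * (2*m+10) + 8" unfolding m by (simp add: algebra_simps)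
    have "2^(6*j) * X = l * (2^(6*j) * 2^((j+j)*j))" unfolding X_def e1 by (simp only: mult.assoc mult.left_commute)
    also have "\<dots> = l * 2^(6*j + (j+j)*j)" by (simp only: power_add)
    also have "\<dots> = l * 2^(m * (2*m+10) + 8)" by (simp only: e2)
    finally have Xeq: "2^(6*j) * X = l * 2^(m * (2*m+10) + 8)" .
    have Nreal: "real (length W) < real l * 2^(m * (2*m+10) + 8)"
    proof -
      have "length W < l * 2^(m * (2*m+10) + 8)" using Nnat unfolding Xeq .
      then have "real (length W) < real (l * 2^(m * (2*m+10) + 8))" by (simp only: of_nat_less_iff)
      then show ?thesis by (simp only: of_nat_mult of_nat_power of_nat_numeral)
    qed
    define x where "x = log 2 (real (n*d))"
    have mx: "real m \<le> x"
    proof -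
      have "(2::real) powr real m = 2^m" by (simp add: powr_realpow)
      also have "\<dots> \<le> real (n*d)"
      proof -
        have "2^m \<le> n*d" using j2 by simp
        then have "real (2^m) \<le> real (n*d)" by (simp only: of_nat_le_iff)
        then show ?thesis by simp
      qed
      finally show ?thesis unfolding x_def using ndpos by (subst le_log_iff) auto
    qed
    have p1: "(real (n*d)) powr (2*x + 10) = 2 powr (x * (2*x+10))"
      unfolding x_def by (rule powr_log_expand[OF ndpos])
    have "real m * (2 * real m + 10) \<le> x * (2*x+10)" using mx by (intro mult_mono) auto
    then have "(2::real) powr (real m * (2 * real m + 10)) \<le> 2 powr (x * (2*x+10))" by simp
    then have p2: "2 ^ (m * (2*m+10)) \<le> (real (n*d)) powr (2*x + 10)" unfolding p1 powr_nat_eq .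
    have dd: "(real d)^2 \<ge> 1" using d1 by simp
    have "real l * 2^(m * (2*m+10) + 8) = 256 * real l * 2 ^ (m * (2*m+10)) * 1"
      by (simp only: power_add) simp
    also have "\<dots> \<le> 256 * real l * (real (n*d)) powr (2*x + 10) * (real d)^2"
      using p2 dd assms(1) by (intro mult_mono) auto
    also have "\<dots> = B" unfolding B_def x_def by simp
    finally show False using Nreal NB by simp
  qed
qed

end
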